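(* (1) If $p<m$, an element $w\in G(m,p,n)$ is regular if and only if there is an integer $r\ge1$ such that, with $g=\gcd(r,n)$, $w$ has exactly $g$ cycles, each of length $n/g$ and weight $r/g$ (mod $m$). (2) An element $w\in G(m,m,n)$ is regular if and only if there is an integer $r\ge1$ such that either (i) with $g=\gcd(r,n)$, $w$ has exactly $g$ cycles, each of length $n/g$ and weight $r/g$; or (ii) with $h=\gcd(r,n-1)$, $w$ has exactly $h+1$ cycles, of which $h$ have length $(n-1)/h$ and weight $r/h$, and the remaining one is a $1$-cycle of weight $-r$ (weights taken mod $m$).
   Context: Let $m,p,n$ be positive integers with $p\mid m$ and $\zeta=e^{2\pi i/m}$. $G(m,1,n)$ consists of pairs $w=[u;a]$, $u\in\mathfrak S_n$, $a\in(\mathbb Z/m\mathbb Z)^n$, identified with the monomial matrix with entry $\zeta^{a_i}$ in position $(u(i),i)$; it acts on $\mathbb C^n$. Cycles of $w$ are cycles of $u$ (fixed points included), and the weight of a cycle is the sum of $a_i$ over its elements, in $\mathbb Z/m\mathbb Z$. $G(m,p,n)$ is the subgroup of $w$ with $\sum_i a_i\equiv0\pmod p$. A reflection is an element whose fixed space in $\mathbb C^n$ has codimension $1$. An element $w$ of a complex reflection group $W$ is regular if it has an eigenvector $v\in\mathbb C^n$ that lies on no reflecting hyperplane of $W$ (i.e. $v\notin\operatorname{fix}(t)$ for every reflection $t\in W$). *)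

theory Defs
  imports "HOL-Analysis.Analysis" "HOL-Combinatorics.Orbits"
begin

text \<open>Coordinates of \<open>\<complex>^n\<close> are indexed by a finite type \<open>'n\<close>, with \<open>n = CARD('n)\<close>.\<close>

definition zeta :: "nat \<Rightarrow> complex" where
  "zeta m = exp (2 * of_real pi * \<i> / of_nat m)"

definition mono_mat :: "nat \<Rightarrow> ('n::finite \<Rightarrow> 'n) \<Rightarrow> ('n \<Rightarrow> int) \<Rightarrow> complex^'n^'n" where
  "mono_mat m u a = (\<chi> i j. if i = u j then zeta m powi (a j) else 0)"

definition Gmpn :: "nat \<Rightarrow> nat \<Rightarrow> (complex^'n^'n) set" where
  "Gmpn m p = {mono_mat m u a | (u :: 'n::finite \<Rightarrow> 'n) a.
                 u permutes UNIV \<and> int p dvd (\<Sum>i\<in>UNIV. a i)}"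

definition fixspace :: "complex^'n^'n \<Rightarrow> (complex^'n::finite) set" where
  "fixspace t = {v. t *v v = v}"

definition is_reflection :: "complex^'n^'n \<Rightarrow> bool" where
  "is_reflection t \<longleftrightarrow> vec.dim (fixspace t) + 1 = CARD('n::finite)"

definition regular_in :: "(complex^'n^'n) set \<Rightarrow> complex^'n^'n \<Rightarrow> bool" where
  "regular_in W w \<longleftrightarrow> (\<exists>v::complex^'n::finite. v \<noteq> 0 \<and> (\<exists>c. w *v v = c *s v) \<and>
      (\<forall>t\<in>W. is_reflection t \<longrightarrow> v \<notin> fixspace t))"

definition cycles_of :: "('n \<Rightarrow> 'n) \<Rightarrow> 'n set set" where
  "cycles_of u = (\<lambda>x. orbit u x) ` UNIV"

definition cyc_weight :: "('n \<Rightarrow> int) \<Rightarrow> 'n set \<Rightarrow> int" where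
  "cyc_weight a C = (\<Sum>i\<in>C. a i)"

definition cycle_type_i :: "nat \<Rightarrow> ('n::finite \<Rightarrow> 'n) \<Rightarrow> ('n \<Rightarrow> int) \<Rightarrow> nat \<Rightarrow> bool" where
  "cycle_type_i m u a r \<longleftrightarrow> (let g = gcd r CARD('n) in
     card (cycles_of u) = g \<and>
     (\<forall>C\<in>cycles_of u. card C = CARD('n) div g \<and>
        cyc_weight a C mod int m = (int (r div g)) mod int m))"

definition cycle_type_ii :: "nat \<Rightarrow> ('n::finite \<Rightarrow> 'n) \<Rightarrow> ('n \<Rightarrow> int) \<Rightarrow> nat \<Rightarrow> bool" where
  "cycle_type_ii m u a r \<longleftrightarrow> (let h = gcd r (CARD('n) - 1) in
     card (cycles_of u) = h + 1 \<and>
     (\<exists>x0. {x0} \<in> cycles_of u \<and> cyc_weight a {x0} mod int m = (- int r) mod int m \<and>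
        (\<forall>C\<in>cycles_of u - {{x0}}. card C = (CARD('n) - 1) div h \<and>
           cyc_weight a C mod int m = (int (r div h)) mod int m)))"

end

theory Submission
  imports Defs
begin

definition E :: "nat \<Rightarrow> int \<Rightarrow> complex" where
  "E N k = exp (2 * of_real pi * \<i> * of_int k / of_nat N)"

lemma E_0[simp]: "E N 0 = 1" unfolding E_def by simp

lemma E_add: "E N a * E N b = E N (a + b)"
  unfolding E_def by (simp add: exp_add[symmetric] add_divide_distrib algebra_simps)

lemma E_nonzero[simp]: "E N a \<noteq> 0" unfolding E_def by simp

lemma E_power: "E N a ^ t = E N (a * int t)"
  unfolding E_def by (simp add: exp_of_nat_mult[symmetric] algebra_simps)

lemma E_powi: "E N a powi t = E N (a * t)"
  unfolding E_def by (simp add: exp_power_int algebra_simps)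

lemma E_scale: "0 < M \<Longrightarrow> E (N * M) (a * int M) = E N a"
  unfolding E_def by (simp add: field_simps)

lemma E_eq_1: assumes "0 < N" shows "E N k = 1 \<longleftrightarrow> int N dvd k"
proof -
  have "E N k = 1 \<longleftrightarrow> (\<exists>n::int. 2 * of_real pi * \<i> * of_int k / of_nat N = 0 + (of_int (2 * n) * pi) * \<i>)"
    unfolding E_def using exp_eq[of _ 0] by simp
  also have "\<dots> \<longleftrightarrow> (\<exists>n::int. (of_int k :: complex) = of_nat N * of_int n)"
    using assms by (auto simp: field_simps)
  also have "\<dots> \<longleftrightarrow> (\<exists>n::int. k = int N * n)"
    by (metis of_int_eq_iff of_int_mult of_int_of_nat_eq)
  finally show ?thesis by (auto simp: dvd_def)
qed

lemma E_eq_iff: assumes "0 < N" shows "E N a = E N b \<longleftrightarrow> int N dvd (a - b)"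
proof -
  have "E N a = E N (a - b) * E N b" by (simp add: E_add)
  then have "E N a = E N b \<longleftrightarrow> E N (a - b) = 1" by auto
  then show ?thesis using E_eq_1[OF assms] by simp
qed

lemma zeta_powi_E: "zeta m powi k = E m k"
  unfolding zeta_def E_def by (simp add: exp_power_int algebra_simps)

lemma root_unity_E: assumes "0 < N" "z ^ N = 1" shows "\<exists>j::nat. z = E N (int j)"
proof -
  have "z \<in> {z::complex. z^N = 1}" using assms by simp
  then show ?thesis using complex_roots_unity[of N] assms(1) unfolding E_def by auto
qed


context fixes u :: "'n::finite \<Rightarrow> 'n" assumes perm: "u permutes UNIV"
begin

lemma pu: "permutation u" using permutes_imp_permutation[OF finite_class.finite_UNIV perm] .

lemma self_orb: "x \<in> orbit u x" using permutation_self_in_orbit[OF pu] .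

lemma orb_card_props:
  "orbit u x = (\<lambda>k. (u ^^ k) x) ` {..<card (orbit u x)} \<and>
   inj_on (\<lambda>k. (u ^^ k) x) {..<card (orbit u x)} \<and> (u ^^ card (orbit u x)) x = x
   \<and> 0 < card (orbit u x)"
proof -
  let ?d = "funpow_dist1 u x x"
  have o: "orbit u x = (\<lambda>k. (u ^^ k) x) ` {0..<?d}"
    using orbit_conv_funpow_dist1[OF self_orb] .
  have i: "inj_on (\<lambda>k. (u ^^ k) x) {0..<?d}" using inj_on_funpow_dist1[OF self_orb] .
  have c: "card (orbit u x) = ?d" unfolding o using card_image[OF i] by simp
  have f: "(u ^^ ?d) x = x" using funpow_dist1_prop[OF self_orb] .
  have z: "{0..<?d} = {..<?d}" by (rule atLeast0LessThan)
  show ?thesis unfolding c using o i f unfolding z by simp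
qed

lemma orb_img: "orbit u x = (\<lambda>k. (u ^^ k) x) ` {..<card (orbit u x)}"
  using orb_card_props[of x] by (rule conjunct1)
lemma orb_inj: "inj_on (\<lambda>k. (u ^^ k) x) {..<card (orbit u x)}"
  using orb_card_props[of x] by (rule conjunct1[OF conjunct2])
lemma orb_full: "(u ^^ card (orbit u x)) x = x"
  using orb_card_props[of x] by (rule conjunct1[OF conjunct2[OF conjunct2]])
lemma orb_pos: "0 < card (orbit u x)"
  using orb_card_props[of x] by (rule conjunct2[OF conjunct2[OF conjunct2]])

lemma orb_period: "(u ^^ k) x = x \<longleftrightarrow> card (orbit u x) dvd k"
proof -
  let ?d = "card (orbit u x)"
  note P = orb_full[of x] orb_inj[of x] orb_pos[of x]
  have e: "(u ^^ k) x = (u ^^ (k mod ?d)) x" using funpow_mod_eq[where f=u and n="?d" and x=x and m=k] P(1) by simp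
  show ?thesis
  proof
    assume "(u ^^ k) x = x"
    then have "(u ^^ (k mod ?d)) x = (u ^^ 0) x" using e by simp
    then have "k mod ?d = 0" using inj_onD[OF P(2), of "k mod ?d" 0] P(3) by simp
    then show "?d dvd k" by auto
  next
    assume "?d dvd k" then show "(u ^^ k) x = x" using e by simp
  qed
qed

lemma orb_funpow_eq: "(u ^^ k) x = (u ^^ k') x \<longleftrightarrow> k mod card (orbit u x) = k' mod card (orbit u x)"
proof -
  let ?d = "card (orbit u x)"
  note P = orb_full[of x] orb_inj[of x] orb_pos[of x]
  have e: "\<And>k. (u ^^ k) x = (u ^^ (k mod ?d)) x" using funpow_mod_eq[where f=u and n="?d" and x=x] P(1) by simp
  show ?thesis
  proof
    assume "(u ^^ k) x = (u ^^ k') x"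
    then have "(u ^^ (k mod ?d)) x = (u ^^ (k' mod ?d)) x" using e[of k] e[of k'] by simp
    then show "k mod ?d = k' mod ?d" using inj_onD[OF P(2), of "k mod ?d" "k' mod ?d"] P(3) by simp
  next
    assume "k mod ?d = k' mod ?d" then show "(u ^^ k) x = (u ^^ k') x" using e[of k] e[of k'] by simp
  qed
qed

lemma orb_range: "orbit u x = range (\<lambda>k. (u ^^ k) x)"
  using orbit_altdef_permutation[OF pu] by auto

lemma orb_same: "y \<in> orbit u x \<Longrightarrow> orbit u y = orbit u x"
proof -
  assume y: "y \<in> orbit u x"
  have "x \<in> orbit u y" using orbit_swap[OF self_orb y] .
  show ?thesis
  proof
    show "orbit u y \<subseteq> orbit u x" using orbit_trans[of _ u y x] y by blast
    show "orbit u x \<subseteq> orbit u y" using orbit_trans[of _ u x y] \<open>x \<in> orbit u y\<close> by blast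
  qed
qed

lemma orb_step: "orbit u (u x) = orbit u x"
  using permutation_orbit_step[OF pu] .

lemma orb_funpow: "orbit u ((u ^^ k) x) = orbit u x"
proof (induct k)
  case (Suc k) then show ?case using orb_step[of "(u ^^ k) x"] by simp
qed simp

lemma orb_eq_iff: "orbit u x = orbit u y \<longleftrightarrow> y \<in> orbit u x"
proof
  assume "orbit u x = orbit u y" then show "y \<in> orbit u x" using self_orb[of y] by simp
next
  assume h: "y \<in> orbit u x" show "orbit u x = orbit u y" using orb_same[OF h] by simp
qed

end

lemma mono_mv:
  assumes "u permutes UNIV"
  shows "(mono_mat m u a *v v) $ (u j) = zeta m powi (a j) * v $ j"
proof -
  have inj: "\<And>t. u j = u t \<longleftrightarrow> t = j" using assms by (metis permutes_inj injD)
  have "(mono_mat m u a *v v) $ (u j) = (\<Sum>t\<in>UNIV. (if t = j then zeta m powi (a t) * v $ t else 0))"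
    unfolding matrix_vector_mult_def mono_mat_def vec_lambda_beta by (intro sum.cong refl) (auto simp: inj)
  also have "\<dots> = zeta m powi (a j) * v $ j" by (simp add: sum.delta)
  finally show ?thesis .
qed

lemma mono_eigen:
  assumes "u permutes UNIV"
  shows "mono_mat m u a *v v = c *s v \<longleftrightarrow> (\<forall>j. E m (a j) * v $ j = c * v $ (u j))"
proof
  assume h: "mono_mat m u a *v v = c *s v"
  show "\<forall>j. E m (a j) * v $ j = c * v $ (u j)"
  proof
    fix j
    have "(mono_mat m u a *v v) $ (u j) = c * v $ (u j)" using h by simp
    then show "E m (a j) * v $ j = c * v $ (u j)" using mono_mv[OF assms] by (simp add: zeta_powi_E)
  qed
next
  assume h: "\<forall>j. E m (a j) * v $ j = c * v $ (u j)"
  show "mono_mat m u a *v v = c *s v"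
  proof (rule vec_eq_iff[THEN iffD2], rule allI)
    fix k
    obtain j where k: "k = u j" using assms by (metis permutes_surj surjD)
    show "(mono_mat m u a *v v) $ k = (c *s v) $ k"
      unfolding k using mono_mv[OF assms] h by (simp add: zeta_powi_E)
  qed
qed

lemma dim_coord_hyp:
  "vec.dim {x::complex^'n::finite. x $ i = 0} + 1 = CARD('n)"
proof -
  have "{x::complex^'n. x $ i = 0} = {x. \<forall>t. t \<notin> (- {i}) \<longrightarrow> x $ t = 0}" by auto
  then have "vec.dim {x::complex^'n. x $ i = 0} = vec.dim {x::complex^'n. \<forall>t. t \<notin> (- {i}) \<longrightarrow> x $ t = 0}"
    by simp
  also have "\<dots> = card (- {i} :: 'n set)" by (rule dim_substandard_cart)
  also have "card (- {i} :: 'n set) = CARD('n) - 1"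
    by (simp add: Compl_eq_Diff_UNIV card_Diff_singleton)
  finally show ?thesis using card_gt_0_iff[of "UNIV :: 'n set"] by simp
qed

lemma dim_shear_hyp:
  assumes "i \<noteq> j"
  shows "vec.dim {x::complex^'n::finite. x $ i = c * x $ j} + 1 = CARD('n)"
proof -
  define g :: "complex^'n \<Rightarrow> complex^'n" where "g y = (\<chi> t. if t = i then y $ t + c * y $ j else y $ t)" for y
  have gc: "g y $ t = (if t = i then y $ t + c * y $ j else y $ t)" for y t by (simp add: g_def)
  have add: "g (x + y) = g x + g y" for x y
    by (simp add: vec_eq_iff gc algebra_simps)
  have scl: "g (k *s x) = k *s g x" for k x
    by (simp add: vec_eq_iff gc algebra_simps)
  have lin: "Vector_Spaces.linear (*s) (*s) g"
    unfolding Vector_Spaces.linear_iff using add scl vec.vector_space_axioms by blast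
  have inj: "inj g"
  proof (rule injI)
    fix y z assume "g y = g z"
    then have h: "\<And>t. g y $ t = g z $ t" by simp
    have yj: "y $ j = z $ j" using h[of j] assms by (simp add: gc)
    have "y $ t = z $ t" for t
    proof (cases "t = i")
      case True then show ?thesis using h[of i] yj by (simp add: gc)
    next
      case False then show ?thesis using h[of t] by (simp add: gc)
    qed
    then show "y = z" by (simp add: vec_eq_iff)
  qed
  have img: "g ` {y. y $ i = 0} = {x. x $ i = c * x $ j}"
  proof
    show "g ` {y. y $ i = 0} \<subseteq> {x. x $ i = c * x $ j}" using assms by (auto simp: gc)
  next
    show "{x. x $ i = c * x $ j} \<subseteq> g ` {y. y $ i = 0}"
    proof
      fix x :: "complex^'n" assume x: "x \<in> {x. x $ i = c * x $ j}"
      define y :: "complex^'n" where "y = (\<chi> t. if t = i then 0 else x $ t)"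
      have yc: "y $ t = (if t = i then 0 else x $ t)" for t by (simp add: y_def)
      have "g y $ t = x $ t" for t using x assms by (simp add: gc yc)
      then have "g y = x" by (simp add: vec_eq_iff)
      moreover have "y $ i = 0" by (simp add: yc)
      ultimately show "x \<in> g ` {y. y $ i = 0}" by blast
    qed
  qed
  have "vec.dim (g ` {y. y $ i = 0}) = vec.dim {y::complex^'n. y $ i = 0}"
    by (rule vec.dim_image_eq[OF lin]) (use inj in \<open>simp add: inj_on_def\<close>)
  then show ?thesis using img dim_coord_hyp[of i] by simp
qed


lemma E_pow_m: "0 < m \<Longrightarrow> E m k ^ m = 1"
  by (simp add: E_power E_eq_1)

lemma mono_in_G: "u permutes UNIV \<Longrightarrow> int p dvd (\<Sum>i\<in>UNIV. a i) \<Longrightarrow> mono_mat m u a \<in> Gmpn m p"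
  unfolding Gmpn_def by blast

lemma not_refl_id:
  fixes t :: "complex^'n::finite^'n" assumes t: "t = mat 1" shows "\<not> is_reflection t"
proof -
  have "fixspace t = UNIV" by (simp add: fixspace_def t)
  then show ?thesis unfolding is_reflection_def using vec_dim_card[where 'a=complex and 'n='n] by simp
qed

lemma fix_eigen1: "u permutes UNIV \<Longrightarrow> v \<in> fixspace (mono_mat m u a) \<longleftrightarrow> (\<forall>j. E m (a j) * v $ j = v $ (u j))"
  unfolding fixspace_def using mono_eigen[of u m a v 1] by simp

lemma regular_of_good:
  fixes v :: "complex^'n::finite"
  assumes m: "0 < m" and u: "u permutes UNIV" and ev: "mono_mat m u a *v v = c *s v" and v0: "v \<noteq> 0"
    and inj: "\<forall>i j. v$i ^ m = v$j ^ m \<longrightarrow> i = j"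
    and H: "(\<forall>i. v$i \<noteq> 0) \<or> p = m"
  shows "regular_in (Gmpn m p) (mono_mat m u a)"
  unfolding regular_in_def
proof (rule exI[of _ v], intro conjI ballI impI)
  show "v \<noteq> 0" by fact
  show "\<exists>c. mono_mat m u a *v v = c *s v" using ev by blast
  fix t :: "complex^'n^'n" assume tG: "t \<in> Gmpn m p" and tr: "is_reflection t"
  show "v \<notin> fixspace t"
  proof
    assume vf: "v \<in> fixspace t"
    obtain u' a' where t: "t = mono_mat m u' a'" and u': "u' permutes UNIV" and pd: "int p dvd (\<Sum>i\<in>UNIV. a' i)"
      using tG unfolding Gmpn_def by blast
    have eq: "\<And>j. E m (a' j) * v $ j = v $ (u' j)" using vf fix_eigen1[OF u'] t by simp
    have uid: "u' j = j" for j
    proof -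
      have "v $ (u' j) ^ m = (E m (a' j) * v $ j) ^ m" using eq[of j] by simp
      also have "\<dots> = v $ j ^ m" using E_pow_m[OF m] by (simp add: power_mult_distrib)
      finally show ?thesis using inj by blast
    qed
    have eq2: "\<And>j. E m (a' j) * v $ j = v $ j" using eq uid by simp
    have all1: "E m (a' j) = 1" for j
    proof (rule ccontr)
      assume nj: "E m (a' j) \<noteq> 1"
      then have vj: "v $ j = 0" using eq2[of j] by (metis mult_cancel_right2)
      then have pm: "p = m" using H by blast
      have others: "E m (a' t) = 1" if "t \<noteq> j" for t
      proof -
        have "v $ t \<noteq> 0"
        proof
          assume "v $ t = 0"
          then have "v$t ^ m = v$j ^ m" using vj by simp
          then show False using inj that by blast
        qed
        then show ?thesis using eq2[of t] by simp
      qed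
      have "int m dvd a' t" if "t \<noteq> j" for t using others[OF that] E_eq_1[OF m] by simp
      then have d1: "int m dvd (\<Sum>i\<in>UNIV - {j}. a' i)" by (intro dvd_sum) auto
      have "(\<Sum>i\<in>UNIV. a' i) = a' j + (\<Sum>i\<in>UNIV - {j}. a' i)"
        by (simp add: sum.remove[of UNIV j])
      then have "int m dvd a' j" using pd pm d1 by (metis dvd_add_left_iff)
      then show False using nj E_eq_1[OF m] by simp
    qed
    have "t = mat 1"
      unfolding t mono_mat_def mat_def using uid all1 by (simp add: zeta_powi_E vec_eq_iff)
    then show False using tr not_refl_id by blast
  qed
qed

lemma sum_two_delta:
  fixes k :: int and i j :: "'n::finite"
  assumes "i \<noteq> j"
  shows "(\<Sum>t\<in>UNIV. (if t = j then k else if t = i then - k else 0)) = 0"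
proof -
  have "(\<Sum>t\<in>UNIV. (if t = j then k else if t = i then - k else 0))
      = (\<Sum>t\<in>UNIV. (if t = j then k else 0) + (if t = i then - k else 0))"
    using assms by (intro sum.cong) auto
  also have "\<dots> = 0"
    using sum.delta[OF finite_class.finite_UNIV, of j "\<lambda>_. k"] sum.delta[OF finite_class.finite_UNIV, of i "\<lambda>_. -k"]
    by (simp add: sum.distrib)
  finally show ?thesis .
qed

lemma good_of_regular_a:
  fixes v :: "complex^'n::finite"
  assumes m: "0 < m" and reg: "\<forall>t\<in>Gmpn m p. is_reflection t \<longrightarrow> v \<notin> fixspace t"
  shows "\<forall>i j. v$i ^ m = v$j ^ m \<longrightarrow> i = j"
proof (intro allI impI, rule ccontr)
  fix i j assume pw: "v$i ^ m = v$j ^ m" and ij: "i \<noteq> j"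
  obtain k where vk: "v $ i = E m k * v $ j"
  proof (cases "v $ j = 0")
    case True
    then have "v $ i ^ m = 0" using pw m by (simp add: power_0_left)
    then have "v $ i = 0" by simp
    then show ?thesis using that[of 0] True by simp
  next
    case False
    have "(v$i / v$j) ^ m = 1" using pw False by (simp add: power_divide)
    then obtain k where "v$i / v$j = E m (int k)" using root_unity_E[OF m] by blast
    then show ?thesis using that[of "int k"] False by (simp add: field_simps)
  qed
  define b where "b t = (if t = j then k else if t = i then - k else 0)" for t
  define T where "T = mono_mat m (Transposition.transpose i j) b"
  have tp: "Transposition.transpose i j permutes UNIV" by (simp add: permutes_swap_id)
  have fixT: "fixspace T = {x. x $ i = E m k * x $ j}"
  proof (intro set_eqI iffI)
    fix x assume "x \<in> fixspace T"
    then have "\<forall>t. E m (b t) * x $ t = x $ (Transposition.transpose i j t)"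
      unfolding T_def using fix_eigen1[OF tp] by simp
    then have "E m (b j) * x $ j = x $ (Transposition.transpose i j j)" by blast
    then show "x \<in> {x. x $ i = E m k * x $ j}" using ij by (simp add: b_def)
  next
    fix x assume x: "x \<in> {x. x $ i = E m k * x $ j}"
    have "E m (b t) * x $ t = x $ (Transposition.transpose i j t)" for t
    proof -
      consider "t = j" | "t = i" | "t \<noteq> i" "t \<noteq> j" by blast
      then show ?thesis
      proof cases
        case 1 then show ?thesis using x ij by (simp add: b_def)
      next
        case 2
        have e1: "E m (- k) * E m k = 1" using E_add[of m "-k" k] by (simp add: E_def)
        have "E m (- k) * (E m k * x $ j) = x $ j" by (simp add: mult.assoc[symmetric] e1)
        then show ?thesis using 2 x ij by (simp add: b_def)
      next
        case 3 then show ?thesis by (simp add: b_def)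
      qed
    qed
    then show "x \<in> fixspace T" unfolding T_def using fix_eigen1[OF tp] by blast
  qed
  have "T \<in> Gmpn m p" unfolding T_def
    by (rule mono_in_G[OF tp]) (simp add: b_def sum_two_delta[OF ij])
  moreover have "is_reflection T" unfolding is_reflection_def fixT using dim_shear_hyp[OF ij] .
  moreover have "v \<in> fixspace T" using vk fixT by simp
  ultimately show False using reg by blast
qed

lemma good_of_regular_b:
  fixes v :: "complex^'n::finite"
  assumes m: "0 < m" and p: "0 < p" "p < m" and reg: "\<forall>t\<in>Gmpn m p. is_reflection t \<longrightarrow> v \<notin> fixspace t"
  shows "v $ i \<noteq> 0"
proof
  assume vi: "v $ i = 0"
  define d where "d t = (if t = i then int p else 0)" for t
  define D where "D = mono_mat m id d"
  have Ep: "E m (int p) \<noteq> 1" using E_eq_1[OF m, of "int p"] p zdvd_imp_le[of "int m" "int p"] by auto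
  have fixD: "fixspace D = {x::complex^'n. x $ i = 0}"
  proof (intro set_eqI iffI)
    fix x assume "x \<in> fixspace D"
    then have "\<forall>t. E m (d t) * x $ t = x $ (id t)" unfolding D_def using fix_eigen1[OF permutes_id] by blast
    then have "E m (d i) * x $ i = x $ (id i)" by blast
    then have "E m (int p) * x $ i = x $ i" by (simp add: d_def)
    then have "(E m (int p) - 1) * x $ i = 0" by (simp add: algebra_simps)
    then show "x \<in> {x::complex^'n. x $ i = 0}" using Ep by simp
  next
    fix x assume x: "x \<in> {x::complex^'n. x $ i = 0}"
    have "\<forall>t. E m (d t) * x $ t = x $ (id t)" using x by (simp add: d_def E_def)
    then show "x \<in> fixspace D" unfolding D_def using fix_eigen1[OF permutes_id] by blast
  qed
  have "D \<in> Gmpn m p" unfolding D_def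
    by (rule mono_in_G) (auto simp: d_def)
  moreover have "is_reflection D" unfolding is_reflection_def fixD using dim_coord_hyp .
  moreover have "v \<in> fixspace D" using vi fixD by simp
  ultimately show False using reg by blast
qed


definition Sw :: "('n \<Rightarrow> 'n) \<Rightarrow> ('n \<Rightarrow> int) \<Rightarrow> 'n \<Rightarrow> nat \<Rightarrow> int" where
  "Sw u a x k = (\<Sum>t<k. a ((u ^^ t) x))"

lemma Sw_Suc: "Sw u a x (Suc k) = Sw u a x k + a ((u ^^ k) x)"
  unfolding Sw_def by simp

lemma Sw_0[simp]: "Sw u a x 0 = 0" unfolding Sw_def by simp

lemma Sw_add: "Sw u a x (k + l) = Sw u a x k + Sw u a ((u ^^ k) x) l"
proof (induct l)
  case (Suc l)
  have "(u ^^ (k + l)) x = (u ^^ l) ((u ^^ k) x)" by (simp add: funpow_add add.commute[of k l])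
  then show ?case using Suc by (simp add: Sw_Suc)
qed simp

lemma iter:
  assumes eig: "\<forall>j. E m (a j) * v $ j = c * v $ (u j)"
  shows "c ^ k * v $ ((u ^^ k) x) = E m (Sw u a x k) * v $ x"
proof (induct k)
  case 0 then show ?case by simp
next
  case (Suc k)
  have "c ^ Suc k * v $ ((u ^^ Suc k) x) = c ^ k * (c * v $ (u ((u ^^ k) x)))" by simp
  also have "\<dots> = c ^ k * (E m (a ((u ^^ k) x)) * v $ ((u ^^ k) x))" using eig by simp
  also have "\<dots> = E m (a ((u ^^ k) x)) * (c ^ k * v $ ((u ^^ k) x))" by simp
  also have "\<dots> = E m (a ((u ^^ k) x)) * (E m (Sw u a x k) * v $ x)" using Suc by simp
  also have "\<dots> = E m (Sw u a x (Suc k)) * v $ x" by (simp add: Sw_Suc E_add[symmetric] algebra_simps)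
  finally show ?case .
qed

lemma iter_pow:
  assumes m: "0 < m" and eig: "\<forall>j. E m (a j) * v $ j = c * v $ (u j)"
  shows "(c ^ m) ^ k * (v $ ((u ^^ k) x)) ^ m = (v $ x) ^ m"
proof -
  have "(c ^ k * v $ ((u ^^ k) x)) ^ m = (E m (Sw u a x k) * v $ x) ^ m" using iter[OF eig] by simp
  then show ?thesis using E_pow_m[OF m] by (simp add: power_mult_distrib power_mult[symmetric] mult.commute)
qed

lemma weight_orbit:
  fixes u :: "'n::finite \<Rightarrow> 'n"
  assumes u: "u permutes UNIV"
  shows "cyc_weight a (orbit u x) = Sw u a x (card (orbit u x))"
proof -
  have P1: "orbit u x = (\<lambda>k. (u ^^ k) x) ` {..<card (orbit u x)}" by (rule orb_img[OF u])
  have P2: "inj_on (\<lambda>k. (u ^^ k) x) {..<card (orbit u x)}" by (rule orb_inj[OF u])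
  have "cyc_weight a (orbit u x) = sum a ((\<lambda>k. (u ^^ k) x) ` {..<card (orbit u x)})"
    unfolding cyc_weight_def by (rule arg_cong[OF P1])
  also have "\<dots> = Sw u a x (card (orbit u x))"
    unfolding Sw_def using sum.reindex[OF P2, of a] by simp
  finally show ?thesis .
qed

lemma norm_E[simp]: "norm (E N k) = 1"
  unfolding E_def by (simp add: norm_exp_eq_Re)


lemma coprime_from_dvd_iff:
  fixes s l :: nat
  assumes l: "0 < l" and H: "\<And>k. l dvd s * k \<Longrightarrow> l dvd k"
  shows "coprime s l"
proof -
  define g where "g = gcd s l"
  from gcd_dvd1[of s l] obtain s' where s': "s = g * s'" unfolding g_def by (rule dvdE)
  from gcd_dvd2[of s l] obtain l' where l': "l = g * l'" unfolding g_def by (rule dvdE)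
  have g0: "0 < g" unfolding g_def using l by simp
  have "s * l' = s' * l" using s' l' by simp
  then have "l dvd s * l'" by simp
  then have "l dvd l'" by (rule H)
  moreover have "0 < l'" using l l' by (cases "l' = 0") auto
  ultimately have "l \<le> l'" by (simp add: dvd_imp_le)
  then have "g * l' \<le> 1 * l'" using l' by simp
  then have "g \<le> 1" using \<open>0 < l'\<close> by (simp only: mult_le_cancel2)
  then have "g = 1" using g0 by simp
  then show ?thesis unfolding g_def by (simp add: coprime_iff_gcd_eq_1)
qed

lemma analysis:
  fixes u :: "'n::finite \<Rightarrow> 'n" and v :: "complex^'n"
  assumes m: "0 < m" and u: "u permutes UNIV"
    and eig: "\<forall>j. E m (a j) * v $ j = c * v $ (u j)"
    and inj: "\<forall>i j. v$i \<noteq> 0 \<longrightarrow> v$j \<noteq> 0 \<longrightarrow> v$i ^ m = v$j ^ m \<longrightarrow> i = j"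
    and x0: "v $ x0 \<noteq> 0"
  shows "\<exists>l s::nat. 0 < l \<and> 1 \<le> s \<and> coprime s l \<and>
           (\<forall>j. v$j \<noteq> 0 \<longrightarrow> card (orbit u j) = l \<and> cyc_weight a (orbit u j) mod int m = int s mod int m)"
proof -
  have c0: "c \<noteq> 0"
  proof
    assume "c = 0"
    then have "E m (a x0) * v $ x0 = 0" using eig by simp
    then show False using x0 by simp
  qed
  have nz: "v $ ((u ^^ k) j) \<noteq> 0" if "v $ j \<noteq> 0" for j k
  proof
    assume "v $ ((u ^^ k) j) = 0"
    then have "E m (Sw u a j k) * v $ j = 0" using iter[OF eig, of k j] by simp
    then show False using that by simp
  qed
  have key: "(u ^^ k) j = j \<longleftrightarrow> (c ^ m) ^ k = 1" if vj: "v $ j \<noteq> 0" for j k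
  proof
    assume "(u ^^ k) j = j"
    then have "(c ^ m) ^ k * (v $ j) ^ m = (v $ j) ^ m" using iter_pow[OF m eig, of k j] by simp
    then show "(c ^ m) ^ k = 1" using vj by simp
  next
    assume "(c ^ m) ^ k = 1"
    then have "(v $ ((u ^^ k) j)) ^ m = (v $ j) ^ m" using iter_pow[OF m eig, of k j] by simp
    then show "(u ^^ k) j = j" using inj[rule_format, OF nz[OF vj, of k] vj] by simp
  qed
  define l0 where "l0 = card (orbit u x0)"
  have l0: "0 < l0" unfolding l0_def by (rule orb_pos[OF u])
  have "(u ^^ l0) x0 = x0" unfolding l0_def by (rule orb_full[OF u])
  then have "(c ^ m) ^ l0 = 1" using key[OF x0] by simp
  then have "c ^ (m * l0) = 1" by (simp add: power_mult)
  then obtain s0 where s0: "c = E (m * l0) (int s0)" using root_unity_E[of "m * l0" c] m l0 by auto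
  have cm: "c ^ m = E l0 (int s0)"
    using s0 E_scale[of m l0 "int s0"] m by (simp add: E_power mult.commute)
  have cmk: "(c ^ m) ^ k = 1 \<longleftrightarrow> l0 dvd s0 * k" for k
    unfolding cm E_power using E_eq_1[OF l0, of "int s0 * int k"] by (simp flip: of_nat_mult)
  have per: "card (orbit u j) dvd k \<longleftrightarrow> l0 dvd s0 * k" if "v $ j \<noteq> 0" for j k
    using orb_period[OF u, of k j] key[OF that, of k] cmk[of k] by simp
  have cop: "coprime s0 l0"
  proof (rule coprime_from_dvd_iff[OF l0])
    fix k assume "l0 dvd s0 * k"
    then show "l0 dvd k" using per[OF x0, of k, folded l0_def] by simp
  qed
  have card_eq: "card (orbit u j) = l0" if vj: "v $ j \<noteq> 0" for j
  proof -
    have h: "card (orbit u j) dvd k \<longleftrightarrow> l0 dvd k" for k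
      using per[OF vj, of k] coprime_dvd_mult_right_iff[of l0 s0 k] cop
      by (simp add: coprime_commute)
    have "card (orbit u j) dvd l0" using h[of l0] by simp
    moreover have "l0 dvd card (orbit u j)" using h[of "card (orbit u j)"] by simp
    ultimately
    show ?thesis by (rule dvd_antisym)
  qed
  have cl: "c ^ l0 = E m (int s0)"
    using s0 E_scale[of l0 m "int s0"] l0 by (simp add: E_power mult.commute)
  have wt: "cyc_weight a (orbit u j) mod int m = int s0 mod int m" if vj: "v $ j \<noteq> 0" for j
  proof -
    have "c ^ l0 * v $ ((u ^^ l0) j) = E m (Sw u a j l0) * v $ j" using iter[OF eig] .
    moreover have "(u ^^ l0) j = j" using orb_period[OF u, of l0 j] card_eq[OF vj] by simp
    ultimately have "E m (int s0) = E m (Sw u a j l0)" using vj cl by simp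
    then have "int m dvd (int s0 - Sw u a j l0)" using E_eq_iff[OF m] by simp
    moreover have "cyc_weight a (orbit u j) = Sw u a j l0" using weight_orbit[OF u] card_eq[OF vj] by simp
    ultimately have "int m dvd (cyc_weight a (orbit u j) - int s0)"
      using dvd_minus_iff[of "int m" "int s0 - Sw u a j l0"] by simp
    then show ?thesis by (simp add: mod_eq_dvd_iff)
  qed
  define s where "s = s0 + m * l0"
  have "coprime s l0" unfolding s_def using cop
    by (simp add: coprime_iff_gcd_eq_1 gcd.commute[of _ l0] gcd_add_mult add.commute[of s0])
  moreover have "1 \<le> s" unfolding s_def using m l0 by (simp add: Suc_le_eq)
  moreover have "int s mod int m = int s0 mod int m" unfolding s_def by simp
  ultimately show ?thesis using l0 card_eq wt by (intro exI[of _ l0] exI[of _ s]) auto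
qed


lemma construction:
  fixes u :: "'n::finite \<Rightarrow> 'n" and T :: "'n set"
  assumes m: "0 < m" and u: "u permutes UNIV" and l: "0 < l" and cop: "coprime s l"
    and Tc: "\<And>j. u j \<in> T \<longleftrightarrow> j \<in> T"
    and H: "\<And>j. j \<in> T \<Longrightarrow> card (orbit u j) = l \<and> cyc_weight a (orbit u j) mod int m = int s mod int m"
  shows "\<exists>(v::complex^'n) c. (\<forall>j. E m (a j) * v$j = c * v$(u j)) \<and> (\<forall>j. v$j \<noteq> 0 \<longleftrightarrow> j \<in> T)
           \<and> (\<forall>i j. v$i \<noteq> 0 \<longrightarrow> v$j \<noteq> 0 \<longrightarrow> v$i ^ m = v$j ^ m \<longrightarrow> i = j)"
proof -
  have Tk: "(u ^^ k) j \<in> T" if "j \<in> T" for j k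
    using that by (induct k) (simp_all add: Tc)
  obtain f :: "'n \<Rightarrow> nat" and n0 where "f ` UNIV = {i. i < n0}" "inj_on f UNIV"
    using finite_imp_inj_to_nat_seg[OF finite_class.finite_UNIV] by blast
  then have finj: "f x = f y \<Longrightarrow> x = y" for x y by (simp add: inj_on_def)
  define rep where "rep j = (SOME y. y \<in> orbit u j)" for j
  have rep_in: "rep j \<in> orbit u j" for j
    unfolding rep_def using self_orb[OF u, of j] by (rule someI)
  have rep_orb: "orbit u (rep j) = orbit u j" for j using orb_same[OF u rep_in] .
  have rep_eq: "orbit u i = orbit u j \<Longrightarrow> rep i = rep j" for i j unfolding rep_def by simp
  have rep_T: "j \<in> T \<Longrightarrow> rep j \<in> T" for j
  proof -
    assume jT: "j \<in> T"
    obtain k where "rep j = (u ^^ k) j" using rep_in[of j] orb_range[OF u, of j] by auto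
    then show ?thesis using Tk[OF jT] by simp
  qed
  define kk where "kk j = (SOME k. (u ^^ k) (rep j) = j)" for j
  have kk: "(u ^^ kk j) (rep j) = j" for j
  proof -
    have "j \<in> orbit u (rep j)" using rep_orb[of j] self_orb[OF u, of j] by simp
    then have "j \<in> range (\<lambda>k. (u ^^ k) (rep j))" using orb_range[OF u, of "rep j"] by simp
    then obtain k where "j = (u ^^ k) (rep j)" by blast
    then have "(u ^^ k) (rep j) = j" by simp
    then show ?thesis unfolding kk_def by (rule someI)
  qed
  define G where "G x k = E (m * l) (- int s * int k) * E m (Sw u a x k)" for x k
  have G0: "G x k \<noteq> 0" for x k unfolding G_def by simp
  have Gstep: "G x (Suc k) = E (m * l) (- int s) * E m (a ((u ^^ k) x)) * G x k" for x k
    unfolding G_def by (simp add: Sw_Suc E_add algebra_simps)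
  have Escale: "E (m * l) (- int s * int l) = E m (- int s)"
    using E_scale[of l m "- int s"] l by simp
  have Gper: "G x (k + l) = G x k" if xT: "x \<in> T" for x k
  proof -
    have y: "(u ^^ k) x \<in> T" using Tk[OF xT] .
    have "Sw u a ((u ^^ k) x) l = cyc_weight a (orbit u ((u ^^ k) x))"
      using weight_orbit[OF u, of a "(u ^^ k) x"] H[OF y] by simp
    then have "Sw u a ((u ^^ k) x) l mod int m = int s mod int m" using H[OF y] by simp
    then have w: "E m (Sw u a ((u ^^ k) x) l) = E m (int s)"
      using E_eq_iff[OF m] by (simp add: mod_eq_dvd_iff)
    have "G x (k + l) = E (m * l) (- int s * int k) * E (m * l) (- int s * int l)
                * (E m (Sw u a x k) * E m (Sw u a ((u ^^ k) x) l))"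
      unfolding G_def by (simp add: Sw_add E_add algebra_simps)
    also have "\<dots> = E (m * l) (- int s * int k) * E m (Sw u a x k) * (E m (- int s) * E m (int s))"
      unfolding Escale w by (simp add: algebra_simps)
    also have "\<dots> = G x k" unfolding G_def by (simp add: E_add)
    finally show ?thesis .
  qed
  have Gmod: "G x (r + l * q) = G x r" if xT: "x \<in> T" for x r q
  proof (induct q)
    case (Suc q)
    have "G x (r + l * Suc q) = G x ((r + l * q) + l)" by (simp add: algebra_simps)
    also have "\<dots> = G x (r + l * q)" by (rule Gper[OF xT])
    finally show ?case using Suc by simp
  qed simp
  have Gwd: "G x k = G x k'" if xT: "x \<in> T" and e: "(u ^^ k) x = (u ^^ k') x" for x k k'
  proof -
    have "k mod l = k' mod l" using e orb_funpow_eq[OF u] H[OF xT] by simp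
    moreover have "G x k = G x (k mod l)" using Gmod[OF xT, of "k mod l" "k div l"] by simp
    moreover have "G x k' = G x (k' mod l)" using Gmod[OF xT, of "k' mod l" "k' div l"] by simp
    ultimately show ?thesis by simp
  qed
  define v :: "complex^'n" where
    "v = (\<chi> j. if j \<in> T then of_nat (Suc (f (rep j))) * G (rep j) (kk j) else 0)"
  have vc: "v $ j = (if j \<in> T then of_nat (Suc (f (rep j))) * G (rep j) (kk j) else 0)" for j
    by (simp add: v_def)
  have vform: "v $ j = of_nat (Suc (f (rep j))) * G (rep j) k" if jT: "j \<in> T" and k: "(u ^^ k) (rep j) = j" for j k
    using Gwd[OF rep_T[OF jT], of "kk j" k] kk[of j] k jT by (simp add: vc)
  define c where "c = E (m * l) (int s)"
  have c1: "c * E (m * l) (- int s) = 1" unfolding c_def by (simp add: E_add)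
  have eig: "E m (a j) * v$j = c * v$(u j)" for j
  proof (cases "j \<in> T")
    case True
    have uT: "u j \<in> T" using Tc True by simp
    have ro: "rep (u j) = rep j" using rep_eq[of "u j" j] orb_step[OF u, of j] by simp
    have "(u ^^ Suc (kk j)) (rep j) = u j" using kk[of j] by simp
    then have "(u ^^ Suc (kk j)) (rep (u j)) = u j" using ro by simp
    then have "v $ (u j) = of_nat (Suc (f (rep j))) * G (rep j) (Suc (kk j))" using vform[OF uT] ro by simp
    also have "\<dots> = of_nat (Suc (f (rep j))) * (E (m * l) (- int s) * E m (a j) * G (rep j) (kk j))"
      using Gstep kk[of j] by simp
    finally have "c * v $ (u j) = (c * E (m * l) (- int s)) * E m (a j) * (of_nat (Suc (f (rep j))) * G (rep j) (kk j))"
      by (simp add: algebra_simps)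
    also have "\<dots> = E m (a j) * v $ j" unfolding c1 using True by (simp add: vc)
    finally show ?thesis by simp
  next
    case False
    then have "u j \<notin> T" using Tc by simp
    then show ?thesis using False by (simp add: vc)
  qed
  have sn: "(of_nat (Suc n) :: complex) \<noteq> 0" for n by (rule of_nat_neq_0)
  have nz: "v$j \<noteq> 0 \<longleftrightarrow> j \<in> T" for j using G0 sn by (simp add: vc del: of_nat_Suc)
  have nrm: "norm (v $ j) = real (Suc (f (rep j)))" if "j \<in> T" for j
    using that by (simp add: vc G_def norm_mult norm_of_nat del: of_nat_Suc)
  have cm: "c ^ m = E l (int s)"
    unfolding c_def E_power using E_scale[of m l "int s"] m by (simp add: mult.commute)
  have injv: "i = j" if vi: "v$i \<noteq> 0" and vj: "v$j \<noteq> 0" and pw: "v$i ^ m = v$j ^ m" for i j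
  proof -
    have iT: "i \<in> T" and jT: "j \<in> T" using vi vj nz by auto
    have "norm (v$i) ^ m = norm (v$j) ^ m" using pw by (metis norm_power)
    then have "norm (v$i) = norm (v$j)" using m by (simp add: power_eq_imp_eq_base)
    then have "f (rep i) = f (rep j)" using nrm[OF iT] nrm[OF jT] by simp
    then have "rep i = rep j" by (rule finj)
    then have "orbit u i = orbit u j" using rep_orb[of i] rep_orb[of j] by simp
    then have "i \<in> orbit u j" using self_orb[OF u, of i] by simp
    then obtain k where ik: "i = (u ^^ k) j" using orb_range[OF u, of j] by auto
    have "(c ^ m) ^ k * (v $ i) ^ m = (v $ j) ^ m" using iter_pow[OF m, of a v c u k j] eig ik by simp
    then have "(c ^ m) ^ k * (v $ i) ^ m = 1 * (v $ i) ^ m" using pw by simp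
    then have "(c ^ m) ^ k = 1" using vi by (simp only: mult_cancel_right power_eq_0_iff) simp
    then have "E l (int s * int k) = 1" unfolding cm E_power .
    then have "int l dvd int s * int k" using E_eq_1[OF l] by simp
    then have "l dvd s * k" by (simp flip: of_nat_mult)
    then have "l dvd k" using coprime_dvd_mult_right_iff[of l s k] cop by (simp add: coprime_commute)
    then have "(u ^^ k) j = j" using orb_period[OF u, of k j] H[OF jT] by simp
    then show ?thesis using ik by simp
  qed
  show ?thesis using eig nz injv by (intro exI[of _ v] exI[of _ c]) blast
qed


lemma cyc_disj:
  fixes u :: "'n::finite \<Rightarrow> 'n"
  assumes u: "u permutes UNIV" and A: "A \<in> cycles_of u" and B: "B \<in> cycles_of u" and ne: "A \<noteq> B"
  shows "A \<inter> B = {}"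
proof (rule ccontr)
  assume "A \<inter> B \<noteq> {}"
  then obtain z where zA: "z \<in> A" and zB: "z \<in> B" by blast
  obtain x where x: "A = orbit u x" using A unfolding cycles_of_def by blast
  obtain y where y: "B = orbit u y" using B unfolding cycles_of_def by blast
  have "orbit u z = orbit u x" using orb_same[OF u] zA x by simp
  moreover have "orbit u z = orbit u y" using orb_same[OF u] zB y by simp
  ultimately show False using ne x y by simp
qed

lemma card_cyc_union:
  fixes u :: "'n::finite \<Rightarrow> 'n"
  assumes u: "u permutes UNIV" and C: "C \<subseteq> cycles_of u" and cl: "\<And>X. X \<in> C \<Longrightarrow> card X = l"
  shows "card (\<Union>C) = l * card C"
proof -
  have "pairwise disjnt C"
    unfolding pairwise_def disjnt_def using cyc_disj[OF u] C by blast
  then have "card (\<Union>C) = sum card C" by (rule card_Union_disjoint) simp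
  also have "\<dots> = sum (\<lambda>_. l) C" using cl by (rule sum.cong[OF refl])
  finally show ?thesis by simp
qed

lemma sum_cyc_union:
  fixes u :: "'n::finite \<Rightarrow> 'n"
  assumes u: "u permutes UNIV" and C: "C \<subseteq> cycles_of u"
  shows "sum a (\<Union>C) = (\<Sum>X\<in>C. cyc_weight a X)"
proof -
  have "\<forall>A\<in>C. \<forall>B\<in>C. A \<noteq> B \<longrightarrow> A \<inter> B = {}" using cyc_disj[OF u] C by blast
  then have "sum a (\<Union>C) = (sum \<circ> sum) a C" by (intro sum.Union_disjoint) simp_all
  then show ?thesis by (simp add: cyc_weight_def comp_def)
qed

lemma union_cycles: "\<Union>(cycles_of u) = (UNIV :: 'n::finite set)" if "u permutes UNIV"
  unfolding cycles_of_def using self_orb[OF that] by blast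

lemma to_type_i:
  fixes u :: "'n::finite \<Rightarrow> 'n"
  assumes m: "0 < m" and u: "u permutes UNIV" and l: "0 < l" and s: "1 \<le> s" and cop: "coprime s l"
    and H: "\<And>j. card (orbit u j) = l \<and> cyc_weight a (orbit u j) mod int m = int s mod int m"
  shows "\<exists>r. r \<ge> 1 \<and> cycle_type_i m u a r"
proof -
  define g where "g = card (cycles_of u)"
  have cl: "\<And>X. X \<in> cycles_of u \<Longrightarrow> card X = l" using H unfolding cycles_of_def by auto
  have n: "CARD('n) = l * g"
    using card_cyc_union[OF u order_refl cl] union_cycles[OF u] unfolding g_def by simp
  have g0: "0 < g" using n by (cases g) auto
  define r where "r = s * g"
  have r1: "r \<ge> 1" unfolding r_def using s g0 by (simp add: Suc_le_eq)
  have gcd: "gcd r CARD('n) = g" unfolding r_def n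
    using gcd_mult_distrib_nat[of g s l] cop by (simp add: coprime_iff_gcd_eq_1 mult.commute)
  have rd: "r div g = s" unfolding r_def using g0 by simp
  have nd: "CARD('n) div g = l" unfolding n using g0 by simp
  have "cycle_type_i m u a r"
    unfolding cycle_type_i_def Let_def gcd rd nd
  proof (intro conjI ballI)
    show "card (cycles_of u) = g" by (simp add: g_def)
  next
    fix C assume "C \<in> cycles_of u"
    then obtain x where "C = orbit u x" unfolding cycles_of_def by blast
    then show "card C = l" "cyc_weight a C mod int m = int s mod int m" using H[of x] by simp_all
  qed
  then show ?thesis using r1 by blast
qed

lemma from_type_i:
  fixes u :: "'n::finite \<Rightarrow> 'n"
  assumes u: "u permutes UNIV" and r: "r \<ge> 1" and T: "cycle_type_i m u a r"
  shows "\<exists>l s. 0 < l \<and> coprime s l \<and>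
     (\<forall>j. card (orbit u j) = l \<and> cyc_weight a (orbit u j) mod int m = int s mod int m)"
proof -
  define g where "g = gcd r CARD('n)"
  have g0: "0 < g" unfolding g_def using r by simp
  have T': "\<And>C. C \<in> cycles_of u \<Longrightarrow> card C = CARD('n) div g \<and> cyc_weight a C mod int m = int (r div g) mod int m"
    using T unfolding cycle_type_i_def Let_def g_def by blast
  have cop: "coprime (r div g) (CARD('n) div g)" unfolding g_def by (rule div_gcd_coprime) (use r in simp)
  have "g dvd CARD('n)" unfolding g_def by simp
  moreover have "g \<le> CARD('n)" unfolding g_def by (simp add: gcd_le2_nat)
  ultimately have l0: "0 < CARD('n) div g" using g0 by (simp add: div_greater_zero_iff)
  have "\<forall>j. card (orbit u j) = CARD('n) div g \<and> cyc_weight a (orbit u j) mod int m = int (r div g) mod int m"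
    using T' unfolding cycles_of_def by blast
  then show ?thesis using l0 cop by blast
qed


lemma to_type_ii:
  fixes u :: "'n::finite \<Rightarrow> 'n"
  assumes m: "0 < m" and u: "u permutes UNIV" and ux0: "u x0 = x0" and l: "0 < l" and s: "1 \<le> s"
    and cop: "coprime s l" and x1: "x1 \<noteq> x0"
    and H: "\<And>j. j \<noteq> x0 \<Longrightarrow> card (orbit u j) = l \<and> cyc_weight a (orbit u j) mod int m = int s mod int m"
    and sm: "int m dvd (\<Sum>i\<in>UNIV. a i)"
  shows "\<exists>r. r \<ge> 1 \<and> cycle_type_ii m u a r"
proof -
  define C' where "C' = cycles_of u - {{x0}}"
  have ox0: "orbit u x0 = {x0}" using ux0 orbit_eq_singleton_iff by metis
  have x0c: "{x0} \<in> cycles_of u" unfolding cycles_of_def using ox0 by (metis rangeI)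
  have memb: "orbit u y \<in> C'" if "y \<noteq> x0" for y
  proof -
    have "orbit u y \<noteq> {x0}" using self_orb[OF u, of y] that by auto
    then show ?thesis unfolding C'_def cycles_of_def by simp
  qed
  have Celt: "\<exists>y. y \<noteq> x0 \<and> X = orbit u y" if XC: "X \<in> C'" for X
  proof -
    obtain y where y: "X = orbit u y" using XC unfolding C'_def cycles_of_def by blast
    have "y \<noteq> x0" using y XC ox0 unfolding C'_def by auto
    then show ?thesis using y by blast
  qed
  have UC: "\<Union>C' = UNIV - {x0}"
  proof
    show "\<Union>C' \<subseteq> UNIV - {x0}"
    proof
      fix z assume "z \<in> \<Union>C'"
      then obtain X where X: "X \<in> C'" "z \<in> X" by blast
      obtain y where y: "y \<noteq> x0" "X = orbit u y" using Celt[OF X(1)] by blast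
      have "z \<noteq> x0"
      proof
        assume "z = x0"
        then have "orbit u x0 = orbit u y" using orb_same[OF u] X(2) y(2) by simp
        then have "X = {x0}" using y(2) ox0 by simp
        then show False using X(1) unfolding C'_def by simp
      qed
      then show "z \<in> UNIV - {x0}" by simp
    qed
  next
    show "UNIV - {x0} \<subseteq> \<Union>C'"
    proof
      fix z assume "z \<in> UNIV - {x0}"
      then have "z \<noteq> x0" by simp
      then show "z \<in> \<Union>C'" using memb self_orb[OF u, of z] by blast
    qed
  qed
  have Csub: "C' \<subseteq> cycles_of u" unfolding C'_def by blast
  have cl: "\<And>X. X \<in> C' \<Longrightarrow> card X = l" using Celt H by blast
  define h where "h = card C'"
  have n1: "CARD('n) - 1 = l * h"
    using card_cyc_union[OF u Csub cl] UC unfolding h_def by (simp add: card_Diff_singleton)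
  have h0: "0 < h"
  proof -
    have "x1 \<in> \<Union>C'" using UC x1 by simp
    then have "C' \<noteq> {}" by blast
    then show ?thesis unfolding h_def by (simp add: card_gt_0_iff finite_subset[OF Csub] cycles_of_def)
  qed
  define r where "r = s * h"
  have r1: "r \<ge> 1" unfolding r_def using s h0 by (simp add: Suc_le_eq)
  have gcd: "gcd r (CARD('n) - 1) = h" unfolding r_def n1
    using gcd_mult_distrib_nat[of h s l] cop by (simp add: coprime_iff_gcd_eq_1 mult.commute)
  have rd: "r div h = s" unfolding r_def using h0 by simp
  have nd: "(CARD('n) - 1) div h = l" unfolding n1 using h0 by simp
  have cyc: "cycles_of u = insert {x0} C'" unfolding C'_def using x0c by blast
  have fin: "finite C'" using finite_subset[OF Csub] unfolding cycles_of_def by simp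
  have nx: "{x0} \<notin> C'" by (simp add: C'_def)
  have cardc: "card (cycles_of u) = h + 1" unfolding cyc h_def using card_insert_disjoint[OF fin nx] by simp
  have sumW: "(\<Sum>X\<in>C'. cyc_weight a X) mod int m = int r mod int m"
  proof -
    have "(\<Sum>X\<in>C'. cyc_weight a X) mod int m = (\<Sum>X\<in>C'. cyc_weight a X mod int m) mod int m"
      by (simp add: mod_sum_eq)
    also have "(\<Sum>X\<in>C'. cyc_weight a X mod int m) = (\<Sum>X\<in>C'. int s mod int m)"
    proof (rule sum.cong[OF refl])
      fix X assume "X \<in> C'"
      then obtain y where "y \<noteq> x0" "X = orbit u y" using Celt by blast
      then show "cyc_weight a X mod int m = int s mod int m" using H by simp
    qed
    also have "\<dots> = int h * (int s mod int m)" unfolding h_def by simp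
    also have "(int h * (int s mod int m)) mod int m = (int h * int s) mod int m" by (simp add: mod_mult_right_eq)
    finally show ?thesis unfolding r_def by (simp add: mult.commute)
  qed
  have tot: "(\<Sum>i\<in>UNIV. a i) = a x0 + (\<Sum>X\<in>C'. cyc_weight a X)"
  proof -
    have "(\<Sum>i\<in>UNIV. a i) = a x0 + sum a (UNIV - {x0})" by (simp add: sum.remove[of UNIV x0])
    also have "sum a (UNIV - {x0}) = (\<Sum>X\<in>C'. cyc_weight a X)" using sum_cyc_union[OF u Csub, of a] UC by simp
    finally show ?thesis .
  qed
  have wx0: "cyc_weight a {x0} mod int m = (- int r) mod int m"
  proof -
    have d1: "int m dvd a x0 + (\<Sum>X\<in>C'. cyc_weight a X)" using sm tot by simp
    have d2: "int m dvd int r - (\<Sum>X\<in>C'. cyc_weight a X)" using sumW by (simp add: mod_eq_dvd_iff dvd_diff_commute)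
    have "int m dvd (a x0 + (\<Sum>X\<in>C'. cyc_weight a X)) + (int r - (\<Sum>X\<in>C'. cyc_weight a X))"
      using d1 d2 by (rule dvd_add)
    then have "int m dvd a x0 - (- int r)" by simp
    then show ?thesis by (simp add: cyc_weight_def mod_eq_dvd_iff)
  qed
  have "cycle_type_ii m u a r"
    unfolding cycle_type_ii_def Let_def gcd rd nd
  proof (intro conjI exI[of _ x0] ballI)
    show "card (cycles_of u) = h + 1" by (rule cardc)
    show "{x0} \<in> cycles_of u" by (rule x0c)
    show "cyc_weight a {x0} mod int m = - int r mod int m" by (rule wx0)
  next
    fix X assume "X \<in> cycles_of u - {{x0}}"
    then have "X \<in> C'" unfolding C'_def .
    then obtain y where "y \<noteq> x0" "X = orbit u y" using Celt by blast
    then show "card X = l" "cyc_weight a X mod int m = int s mod int m" using H by simp_all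
  qed
  then show ?thesis using r1 by blast
qed

lemma from_type_ii:
  fixes u :: "'n::finite \<Rightarrow> 'n"
  assumes u: "u permutes UNIV" and r: "r \<ge> 1" and T: "cycle_type_ii m u a r"
  shows "\<exists>x0 l s. u x0 = x0 \<and> 0 < l \<and> coprime s l \<and> (\<exists>x1. x1 \<noteq> x0) \<and>
     (\<forall>j. j \<noteq> x0 \<longrightarrow> card (orbit u j) = l \<and> cyc_weight a (orbit u j) mod int m = int s mod int m)"
proof -
  define h where "h = gcd r (CARD('n) - 1)"
  have cc: "card (cycles_of u) = h + 1" using T unfolding cycle_type_ii_def Let_def h_def by blast
  obtain x0 where x0c: "{x0} \<in> cycles_of u"
    and T': "\<And>C. C \<in> cycles_of u - {{x0}} \<Longrightarrow> card C = (CARD('n) - 1) div h \<and> cyc_weight a C mod int m = int (r div h) mod int m"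
    using T unfolding cycle_type_ii_def Let_def h_def by blast
  obtain y where y: "{x0} = orbit u y" using x0c unfolding cycles_of_def by blast
  then have "y = x0" using self_orb[OF u, of y] by auto
  then have ux0: "u x0 = x0" using y orbit_eq_singleton_iff by metis
  have cle: "card (cycles_of u) \<le> CARD('n)" unfolding cycles_of_def by (rule card_image_le) simp
  have n2: "2 \<le> CARD('n)"
  proof (rule ccontr)
    assume "\<not> 2 \<le> CARD('n)"
    moreover have "0 < CARD('n)" using card_gt_0_iff[of "UNIV :: 'n set"] finite_class.finite_UNIV by blast
    ultimately have "CARD('n) = 1" by linarith
    then have "h = r" unfolding h_def by simp
    then show False using cc cle r \<open>CARD('n) = 1\<close> by simp
  qed
  have h0: "0 < h" unfolding h_def using n2 by simp
  have "h dvd CARD('n) - 1" unfolding h_def by simp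
  moreover have "h \<le> CARD('n) - 1" unfolding h_def using n2 by (simp add: gcd_le2_nat)
  ultimately have l0: "0 < (CARD('n) - 1) div h" using h0 by (simp add: div_greater_zero_iff)
  have cop: "coprime (r div h) ((CARD('n) - 1) div h)" unfolding h_def by (rule div_gcd_coprime) (use r in simp)
  obtain x1 where x1: "x1 \<noteq> x0"
  proof (rule ccontr)
    assume "\<not> thesis"
    then have "\<forall>x1. x1 = x0" using that by blast
    then have U: "(UNIV :: 'n set) = {x0}" by blast
    have "CARD('n) = card {x0}" by (subst U) (rule refl)
    then show False using n2 by simp
  qed
  have H: "card (orbit u j) = (CARD('n) - 1) div h \<and> cyc_weight a (orbit u j) mod int m = int (r div h) mod int m"
    if "j \<noteq> x0" for j
  proof -
    have "orbit u j \<noteq> {x0}" using self_orb[OF u, of j] that by auto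
    then have "orbit u j \<in> cycles_of u - {{x0}}" unfolding cycles_of_def by simp
    then show ?thesis using T' by blast
  qed
  show ?thesis using ux0 l0 cop x1 H by blast
qed


lemma reg_unfold:
  assumes "regular_in W (mono_mat m u a)" and u: "u permutes UNIV"
  obtains v :: "complex^'n::finite" and c where "v \<noteq> 0" "\<forall>j. E m (a j) * v$j = c * v$(u j)"
    "\<forall>t\<in>W. is_reflection t \<longrightarrow> v \<notin> fixspace t"
  using assms(1) mono_eigen[OF u] unfolding regular_in_def by blast

lemma vec_nz: "v $ x \<noteq> 0 \<Longrightarrow> v \<noteq> 0" by auto

lemma from_i_regular:
  fixes u :: "'n::finite \<Rightarrow> 'n"
  assumes m: "0 < m" and u: "u permutes UNIV" and r: "r \<ge> 1" and T: "cycle_type_i m u a r"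
  shows "regular_in (Gmpn m p) (mono_mat m u a)"
proof -
  obtain l s where l: "0 < l" and cop: "coprime s l"
    and H: "\<forall>j. card (orbit u j) = l \<and> cyc_weight a (orbit u j) mod int m = int s mod int m"
    using from_type_i[OF u r T] by blast
  obtain v :: "complex^'n" and c where eig: "\<forall>j. E m (a j) * v$j = c * v$(u j)" and nz: "\<forall>j. v$j \<noteq> 0 \<longleftrightarrow> j \<in> UNIV"
    and inj: "\<forall>i j. v$i \<noteq> 0 \<longrightarrow> v$j \<noteq> 0 \<longrightarrow> v$i ^ m = v$j ^ m \<longrightarrow> i = j"
  proof -
    have H': "\<And>j. j \<in> UNIV \<Longrightarrow> card (orbit u j) = l \<and> cyc_weight a (orbit u j) mod int m = int s mod int m"
      using H by simp
    have TcU: "\<And>j. u j \<in> (UNIV::'n set) \<longleftrightarrow> j \<in> UNIV" by simp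
    show ?thesis using construction[OF m u l cop TcU H'] that by blast
  qed
  have nz': "\<forall>i. v$i \<noteq> 0" using nz by simp
  show ?thesis
  proof (rule regular_of_good[OF m u _ vec_nz])
    show "mono_mat m u a *v v = c *s v" using eig mono_eigen[OF u] by blast
    show "v $ undefined \<noteq> 0" using nz' by simp
    show "\<forall>i j. v$i ^ m = v$j ^ m \<longrightarrow> i = j" using inj nz' by blast
    show "(\<forall>i. v$i \<noteq> 0) \<or> p = m" using nz' by simp
  qed
qed

lemma from_ii_regular:
  fixes u :: "'n::finite \<Rightarrow> 'n"
  assumes m: "0 < m" and u: "u permutes UNIV" and r: "r \<ge> 1" and T: "cycle_type_ii m u a r"
  shows "regular_in (Gmpn m m) (mono_mat m u a)"
proof -
  obtain x0 l s x1 where ux0: "u x0 = x0" and l: "0 < l" and cop: "coprime s l" and x1: "x1 \<noteq> x0"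
    and H: "\<forall>j. j \<noteq> x0 \<longrightarrow> card (orbit u j) = l \<and> cyc_weight a (orbit u j) mod int m = int s mod int m"
    using from_type_ii[OF u r T] by blast
  have Tc: "u j \<in> UNIV - {x0} \<longleftrightarrow> j \<in> UNIV - {x0}" for j
  proof -
    have "u j = x0 \<longleftrightarrow> j = x0"
    proof
      assume "u j = x0" then have "u j = u x0" using ux0 by simp
      then show "j = x0" using injD[OF permutes_inj[OF u]] by blast
    qed (simp add: ux0)
    then show ?thesis by simp
  qed
  obtain v :: "complex^'n" and c where eig: "\<forall>j. E m (a j) * v$j = c * v$(u j)" and nz: "\<forall>j. v$j \<noteq> 0 \<longleftrightarrow> j \<in> UNIV - {x0}"
    and inj: "\<forall>i j. v$i \<noteq> 0 \<longrightarrow> v$j \<noteq> 0 \<longrightarrow> v$i ^ m = v$j ^ m \<longrightarrow> i = j"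
  proof -
    have H': "\<And>j. j \<in> UNIV - {x0} \<Longrightarrow> card (orbit u j) = l \<and> cyc_weight a (orbit u j) mod int m = int s mod int m"
      using H by simp
    show ?thesis using construction[OF m u l cop Tc H'] that by blast
  qed
  have ginj: "\<forall>i j. v$i ^ m = v$j ^ m \<longrightarrow> i = j"
  proof (intro allI impI)
    fix i j assume pw: "v$i ^ m = v$j ^ m"
    show "i = j"
    proof (cases "v$i = 0")
      case True
      then have "v$j ^ m = 0" using pw m by (simp add: power_0_left)
      then have "v$j = 0" by simp
      then show ?thesis using True nz by auto
    next
      case False
      then have "v$j \<noteq> 0" using pw m by (auto simp: power_0_left)
      then show ?thesis using False inj pw by blast
    qed
  qed
  show ?thesis
  proof (rule regular_of_good[OF m u _ vec_nz])
    show "mono_mat m u a *v v = c *s v" using eig mono_eigen[OF u] by blast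
    show "v $ x1 \<noteq> 0" using nz x1 by simp
    show "\<forall>i j. v$i ^ m = v$j ^ m \<longrightarrow> i = j" by (rule ginj)
    show "(\<forall>i. v$i \<noteq> 0) \<or> m = m" by simp
  qed
qed

lemma to_i_from_nonzero:
  fixes u :: "'n::finite \<Rightarrow> 'n" and v :: "complex^'n"
  assumes m: "0 < m" and u: "u permutes UNIV" and eig: "\<forall>j. E m (a j) * v$j = c * v$(u j)"
    and nz: "\<forall>i. v$i \<noteq> 0" and inj: "\<forall>i j. v$i ^ m = v$j ^ m \<longrightarrow> i = j"
  shows "\<exists>r. r \<ge> 1 \<and> cycle_type_i m u a r"
proof -
  obtain l s where "0 < l" "1 \<le> s" "coprime s l"
    and H: "\<forall>j. v$j \<noteq> 0 \<longrightarrow> card (orbit u j) = l \<and> cyc_weight a (orbit u j) mod int m = int s mod int m"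
    using analysis[OF m u eig, of undefined] inj nz by blast
  then show ?thesis using to_type_i[OF m u, of l s a] nz by blast
qed

theorem mainTheorem14:
  fixes m p :: nat
  assumes "0 < m" and "0 < p" and "p dvd m"
  shows "(p < m \<longrightarrow>
           (\<forall>(u::'n::finite \<Rightarrow> 'n) a. u permutes UNIV \<longrightarrow> int p dvd (\<Sum>i\<in>UNIV. a i) \<longrightarrow>
              (regular_in (Gmpn m p) (mono_mat m u a) \<longleftrightarrow>
               (\<exists>r::nat. r \<ge> 1 \<and> cycle_type_i m u a r))))
       \<and> (\<forall>(u::'n \<Rightarrow> 'n) a. u permutes UNIV \<longrightarrow> int m dvd (\<Sum>i\<in>UNIV. a i) \<longrightarrow>
              (regular_in (Gmpn m m) (mono_mat m u a) \<longleftrightarrow>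
               (\<exists>r::nat. r \<ge> 1 \<and> (cycle_type_i m u a r \<or> cycle_type_ii m u a r))))"
proof (intro conjI impI allI iffI)
  note m = assms(1)
  fix u :: "'n \<Rightarrow> 'n" and a :: "'n \<Rightarrow> int"
  assume pm: "p < m" and u: "u permutes UNIV" and "int p dvd (\<Sum>i\<in>UNIV. a i)"
  {
    assume reg: "regular_in (Gmpn m p) (mono_mat m u a)"
    obtain v :: "complex^'n" and c where v0: "v \<noteq> 0" and eig: "\<forall>j. E m (a j) * v$j = c * v$(u j)"
      and R: "\<forall>t\<in>Gmpn m p. is_reflection t \<longrightarrow> v \<notin> fixspace t"
      using reg_unfold[OF reg u] by blast
    have nz: "\<forall>i. v$i \<noteq> 0" using good_of_regular_b[OF m assms(2) pm R] by blast
    have inj: "\<forall>i j. v$i ^ m = v$j ^ m \<longrightarrow> i = j" using good_of_regular_a[OF m R] .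
    show "\<exists>r. r \<ge> 1 \<and> cycle_type_i m u a r" by (rule to_i_from_nonzero[OF m u eig nz inj])
  next
    assume "\<exists>r. r \<ge> 1 \<and> cycle_type_i m u a r"
    then obtain r where "r \<ge> 1" "cycle_type_i m u a r" by blast
    then show "regular_in (Gmpn m p) (mono_mat m u a)" using from_i_regular[OF m u] by blast
  }
next
  note m = assms(1)
  fix u :: "'n \<Rightarrow> 'n" and a :: "'n \<Rightarrow> int"
  assume u: "u permutes UNIV" and sm: "int m dvd (\<Sum>i\<in>UNIV. a i)"
  {
    assume reg: "regular_in (Gmpn m m) (mono_mat m u a)"
    obtain v :: "complex^'n" and c where v0: "v \<noteq> 0" and eig: "\<forall>j. E m (a j) * v$j = c * v$(u j)"
      and R: "\<forall>t\<in>Gmpn m m. is_reflection t \<longrightarrow> v \<notin> fixspace t"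
      using reg_unfold[OF reg u] by blast
    have inj: "\<forall>i j. v$i ^ m = v$j ^ m \<longrightarrow> i = j" using good_of_regular_a[OF m R] .
    show "\<exists>r. r \<ge> 1 \<and> (cycle_type_i m u a r \<or> cycle_type_ii m u a r)"
    proof (cases "\<forall>i. v$i \<noteq> 0")
      case True
      then show ?thesis using to_i_from_nonzero[OF m u eig True inj] by blast
    next
      case False
      then obtain x0 where vx0: "v$x0 = 0" by blast
      obtain x1 where vx1: "v$x1 \<noteq> 0" using v0 by (metis vec_eq_iff zero_index)
      have x1: "x1 \<noteq> x0" using vx0 vx1 by auto
      have c0: "c \<noteq> 0"
      proof
        assume "c = 0"
        then have "E m (a x1) * v$x1 = 0" using eig by simp
        then show False using vx1 by simp
      qed
      have "c * v$(u x0) = 0" using eig vx0 by (metis mult_zero_right)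
      then have "v$(u x0) = 0" using c0 by simp
      then have "v$(u x0) ^ m = v$x0 ^ m" using vx0 by simp
      then have ux0: "u x0 = x0" using inj by blast
      have nzj: "v$j \<noteq> 0" if "j \<noteq> x0" for j
      proof
        assume "v$j = 0"
        then have "v$j ^ m = v$x0 ^ m" using vx0 by simp
        then show False using inj that by blast
      qed
      obtain l s where l: "0 < l" and s: "1 \<le> s" and cop: "coprime s l"
        and H: "\<forall>j. v$j \<noteq> 0 \<longrightarrow> card (orbit u j) = l \<and> cyc_weight a (orbit u j) mod int m = int s mod int m"
        using analysis[OF m u eig _ vx1] inj by blast
      have "\<exists>r. r \<ge> 1 \<and> cycle_type_ii m u a r"
        by (rule to_type_ii[OF m u ux0 l s cop x1 _ sm]) (use H nzj in blast)
      then show ?thesis by blast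
    qed
  next
    assume "\<exists>r. r \<ge> 1 \<and> (cycle_type_i m u a r \<or> cycle_type_ii m u a r)"
    then obtain r where r: "r \<ge> 1" and T: "cycle_type_i m u a r \<or> cycle_type_ii m u a r" by blast
    then show "regular_in (Gmpn m m) (mono_mat m u a)"
      using from_i_regular[OF m u r] from_ii_regular[OF m u r] by blast
  }
qed

end
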